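(* Let $\omega\in\mathbb T^1\setminus\mathbb Q$, $f\in\mathcal V_\omega$, and let $\phi^+$ be a representative of the SNA of $f$. Let $\theta,\theta'\in\mathbb T^1$ with $d(\theta,\theta')<|E|/(4S)$ (where $|E|$ is the length of $E$), and suppose $\phi^+(\vartheta+\omega)=f_\vartheta(\phi^+(\vartheta))$ holds for every $\vartheta\in\{\theta+m\omega,\theta'+m\omega: m\in\mathbb Z\}$. For $n\in\mathbb N_0$ and $\eta,\eta'\in\mathbb T^1$ let $\wp^n(\eta,\eta')=\#\{m\in\mathbb Z: -1\le m<n-1,\ \phi^+(\eta+m\omega)\in C,\ \phi^+(\eta'+m\omega)\in C,\ \eta+m\omega\notin\mathcal I_0,\ \eta'+m\omega\notin\mathcal I_0\}$. Then for all $n\in\mathbb N$, $$d\big(\phi^+(\theta+n\omega),\phi^+(\theta'+n\omega)\big)\le\alpha^{2n-3\wp^n(\theta,\theta')}\,d\big(\phi^+(\theta),\phi^+(\theta')\big)+S\,d(\theta,\theta')\sum_{k=1}^n\alpha^{2(n-k)-3\wp^{n-k}(\theta+k\omega,\theta'+k\omega)}.$$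
   Context: Notation: $\mathbb T^1=\mathbb R/\mathbb Z$, $d$ the usual distance on $\mathbb T^1$, $\pi_1,\pi_2$ the coordinate projections of $\mathbb T^2=\mathbb T^1\times\mathbb T^1$, $\mathrm{Leb}$ Lebesgue measure on $\mathbb T^1$. Skew products: for irrational $\omega$, $\mathcal F_\omega$ is the set of $C^1$-diffeomorphisms $f$ of $\mathbb T^2$ homotopic to the identity of the form $f(\theta,x)=(\theta+\omega,f_\theta(x))$. Write $f^k_\theta(x)=\pi_2(f^k(\theta,x))$ for $k\in\mathbb Z$. Invariant graphs: a measurable $\phi:\mathbb T^1\to\mathbb T^1$ is an invariant graph if $f_\theta(\phi(\theta))=\phi(\theta+\omega)$ for Lebesgue-a.e. $\theta$; graphs agreeing a.e. are identified. Its Lyapunov exponent is $\lambda(\phi)=\int_{\mathbb T^1}\log|\partial_xf_\theta(\phi(\theta))|\,d\theta$. It is an SNA (resp. SNR) if $\lambda(\phi)<0$ (resp. $>0$) and there is no continuous function a.e. equal to $\phi$. The associated measure is $\mu_\phi(A)=\mathrm{Leb}(\pi_1(A\cap\Phi))$, $\Phi=\{(\theta,\phi(\theta))\}$. The class $\mathcal V_\omega$: $f\in\mathcal F_\omega$ belongs to $\mathcal V_\omega$ if the following hold for some choice of data. (i) There are disjoint closed intervals $C=[c^-,c^+]$, $E=[e^-,e^+]\subseteq\mathbb T^1$ and a set $\mathcal I_0\subseteq\mathbb T^1$ which is a union of $\mathcal N$ disjoint open intervals, and constants $\alpha>4$, $S>0$, such that: $f_\theta(x)\in\mathrm{int}(C)$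 whenever $x\notin(e^-,e^+)$ and $\theta\notin\mathcal I_0$; for all $\theta,\theta',x,x'$: $\alpha^{-2}d(x,x')\le d(f_\theta(x),f_\theta(x'))\le\alpha^2d(x,x')$ and $d(f_\theta(x),f_{\theta'}(x))\le S\,d(\theta,\theta')$; $|\partial_xf_\theta(x)|\le\alpha^{-1}$ for $x\in C$; $|\partial_xf_\theta(x)|\ge\alpha$ for $x\in E$. (ii) Integers $\kappa\ge2$, $K_0\ge1$, $K_n=K_0\kappa^n$, $b_0=1$, $b_n=(1-1/K_{n-1})b_{n-1}$, with $b=\lim_n b_n>\sqrt{5/6}$. A super-exponentially increasing integer sequence $(M_n)_{n\ge0}$ with $M_0\ge2$ and $M_{n+1}\le2\alpha^{M_n/16}$. A non-increasing positive sequence $(\varepsilon_n)$ with $\varepsilon_0\le1$ and $\varepsilon_{n+1}\le2\alpha^{-M_n/4}/s$ for a fixed $s>0$. Moreover $\alpha\ge\alpha_*$ and $\varepsilon_0\le\varepsilon_*$, where $\alpha_*>1,\varepsilon_*>0$ are thresholds guaranteeing $\sum_{n\ge0}(2K_nM_n+1)\mathcal N\varepsilon_n\le\sum_{n\ge0}\varepsilon_n^{1/2}<1/16$; and each component of $\mathcal I_0$ has length $<\varepsilon_0$. (iii) Critical regions: recursively $\mathcal A_n=(\mathcal I_n-(M_n-1)\omega)\times C$, $\mathcal B_n=(\mathcal I_n+(M_n+1)\omega)\times E$, $\mathcal I_{n+1}=\mathrm{int}\,\pi_1\big(f^{M_n-1}(\mathcal A_n)\cap f^{-(M_n+1)}(\mathcal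 B_n)\big)$. Let $\mathcal W_n^+=\bigcup_{j=0}^n\bigcup_{l=1}^{M_j+1}(\mathcal I_j+l\omega)$, $\mathcal W_n^-=\bigcup_{j=0}^n\bigcup_{l=-(M_j-1)}^{0}(\mathcal I_j+l\omega)$, $\mathcal W_{-1}^\pm=\emptyset$. For every $n\in\mathbb N$: $\mathcal I_j\ne\emptyset$ for $j\le n$; $\mathcal I_j\cap\bigcup_{k=1}^{2K_jM_j}(\mathcal I_j+k\omega)=\emptyset$ for $j=0,\dots,n$; $\big((\mathcal I_j-(M_j-1)\omega)\cup(\mathcal I_j+(M_j+1)\omega)\big)\cap(\mathcal W_{j-1}^+\cup\mathcal W_{j-1}^-)=\emptyset$ for $j=1,\dots,n$; and $\mathcal I_n$ has exactly $\mathcal N$ connected components, each of length $<\varepsilon_n$. (iv) $f$ has an SNA $\phi^+$ and an SNR $\phi^-$, and $\mu_{\phi^+},\mu_{\phi^-}$ are the only $f$-invariant ergodic probability measures. (v) $f$ is minimal. *)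

theory Defs
  imports "HOL-Probability.Probability"
begin

text \<open>Points of T^1 are represented by reals (taken modulo 1); subsets of T^1 by
  1-periodic subsets of R; the usual distance on T^1 is the distance to the nearest
  integer of the difference.\<close>

definition tdist :: "real \<Rightarrow> real \<Rightarrow> real" where
  "tdist x y = \<bar>(x - y) - of_int (round (x - y))\<bar>"

definition carc :: "real \<Rightarrow> real \<Rightarrow> real set" where
  "carc a b = {x. \<exists>k::int. a \<le> x + of_int k \<and> x + of_int k \<le> b}"

definition oarc :: "real \<Rightarrow> real \<Rightarrow> real set" where
  "oarc a b = {x. \<exists>k::int. a < x + of_int k \<and> x + of_int k < b}"

definition shift :: "real \<Rightarrow> real set \<Rightarrow> real set" where
  "shift c A = (\<lambda>t. t + c) ` A"

text \<open>U is a union of N pairwise disjoint open arcs, each of length < eps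
  (so, for eps \<le> 1, U has exactly N connected components, each of length < eps).\<close>
definition arc_union :: "nat \<Rightarrow> real \<Rightarrow> real set \<Rightarrow> bool" where
  "arc_union N eps U \<longleftrightarrow>
     (\<exists>a l :: nat \<Rightarrow> real.
        (\<forall>i<N. 0 < l i \<and> l i < eps) \<and>
        (\<forall>i<N. \<forall>j<N. i \<noteq> j \<longrightarrow> oarc (a i) (a i + l i) \<inter> oarc (a j) (a j + l j) = {}) \<and>
        U = (\<Union>i<N. oarc (a i) (a i + l i)))"

text \<open>A skew product f(theta,x) = (theta+omega, f_theta(x)) on T^2 is given by the lift
  g theta x of its fibre maps: g is 1-periodic in theta and of degree one in x
  (f homotopic to the identity), jointly C^1, each g theta is a bijection of R
  with nonvanishing derivative (so f is a C^1-diffeomorphism of T^2).\<close>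

definition Fmap :: "real \<Rightarrow> (real \<Rightarrow> real \<Rightarrow> real) \<Rightarrow> real \<times> real \<Rightarrow> real \<times> real" where
  "Fmap \<omega> g = (\<lambda>(t, x). (t + \<omega>, g t x))"

definition skew_class :: "real \<Rightarrow> (real \<Rightarrow> real \<Rightarrow> real) \<Rightarrow> bool" where
  "skew_class \<omega> g \<longleftrightarrow>
     \<omega> \<notin> \<rat> \<and>
     (\<forall>t x. g (t + 1) x = g t x) \<and>
     (\<forall>t x. g t (x + 1) = g t x + 1) \<and>
     (\<forall>t. bij (g t)) \<and>
     (\<exists>gt gx :: real \<Rightarrow> real \<Rightarrow> real.
        (\<forall>t x. ((\<lambda>p. g (fst p) (snd p)) has_derivative
                  (\<lambda>h. fst h * gt t x + snd h * gx t x)) (at (t, x))) \<and>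
        continuous_on UNIV (\<lambda>p. gt (fst p) (snd p)) \<and>
        continuous_on UNIV (\<lambda>p. gx (fst p) (snd p)) \<and>
        (\<forall>t x. gx t x \<noteq> 0))"

definition inv_graph :: "real \<Rightarrow> (real \<Rightarrow> real \<Rightarrow> real) \<Rightarrow> (real \<Rightarrow> real) \<Rightarrow> bool" where
  "inv_graph \<omega> g \<phi> \<longleftrightarrow>
     (\<forall>t. \<phi> (t + 1) = \<phi> t) \<and> \<phi> \<in> borel_measurable lebesgue \<and>
     (AE t in lebesgue. frac (g t (\<phi> t)) = frac (\<phi> (t + \<omega>)))"

definition lyap :: "(real \<Rightarrow> real \<Rightarrow> real) \<Rightarrow> (real \<Rightarrow> real) \<Rightarrow> real" where
  "lyap g \<phi> = (LINT t:{0..1}|lebesgue. ln \<bar>deriv (g t) (\<phi> t)\<bar>)"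

text \<open>phi agrees a.e. with a continuous map T^1 -> T^1 (given by a continuous lift psi
  with psi(t+1) = psi t + k).\<close>
definition ae_continuous :: "(real \<Rightarrow> real) \<Rightarrow> bool" where
  "ae_continuous \<phi> \<longleftrightarrow>
     (\<exists>\<psi> :: real \<Rightarrow> real. \<exists>k::int. continuous_on UNIV \<psi> \<and>
        (\<forall>t. \<psi> (t + 1) = \<psi> t + of_int k) \<and>
        (AE t in lebesgue. frac (\<psi> t) = frac (\<phi> t)))"

definition is_SNA :: "real \<Rightarrow> (real \<Rightarrow> real \<Rightarrow> real) \<Rightarrow> (real \<Rightarrow> real) \<Rightarrow> bool" where
  "is_SNA \<omega> g \<phi> \<longleftrightarrow> inv_graph \<omega> g \<phi> \<and> lyap g \<phi> < 0 \<and> \<not> ae_continuous \<phi>"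

definition is_SNR :: "real \<Rightarrow> (real \<Rightarrow> real \<Rightarrow> real) \<Rightarrow> (real \<Rightarrow> real) \<Rightarrow> bool" where
  "is_SNR \<omega> g \<phi> \<longleftrightarrow> inv_graph \<omega> g \<phi> \<and> lyap g \<phi> > 0 \<and> \<not> ae_continuous \<phi>"

definition torus2 :: "(real \<times> real) measure" where
  "torus2 = restrict_space borel ({0..<1} \<times> {0..<1})"

definition circle_leb :: "real measure" where
  "circle_leb = restrict_space lebesgue {0..<1}"

definition Tmap :: "real \<Rightarrow> (real \<Rightarrow> real \<Rightarrow> real) \<Rightarrow> real \<times> real \<Rightarrow> real \<times> real" where
  "Tmap \<omega> g = (\<lambda>(t, x). (frac (t + \<omega>), frac (g t x)))"

text \<open>mu_phi(A) = Leb(pi_1(A \<inter> Phi)) = Leb {theta. (theta, phi theta) \<in> A}.\<close>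
definition graph_measure :: "(real \<Rightarrow> real) \<Rightarrow> (real \<times> real) measure" where
  "graph_measure \<phi> = distr circle_leb torus2 (\<lambda>t. (t, frac (\<phi> t)))"

definition erg_inv :: "real \<Rightarrow> (real \<Rightarrow> real \<Rightarrow> real) \<Rightarrow> (real \<times> real) measure \<Rightarrow> bool" where
  "erg_inv \<omega> g \<mu> \<longleftrightarrow>
     prob_space \<mu> \<and> sets \<mu> = sets torus2 \<and>
     Tmap \<omega> g \<in> measurable \<mu> \<mu> \<and> distr \<mu> \<mu> (Tmap \<omega> g) = \<mu> \<and>
     (\<forall>A \<in> sets \<mu>. Tmap \<omega> g -` A \<inter> space \<mu> = A \<longrightarrow> emeasure \<mu> A = 0 \<or> emeasure \<mu> A = 1)"

definition minimal :: "real \<Rightarrow> (real \<Rightarrow> real \<Rightarrow> real) \<Rightarrow> bool" where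
  "minimal \<omega> g \<longleftrightarrow>
     (\<forall>p q. \<forall>e>0. \<exists>n::nat.
        (tdist (fst ((Fmap \<omega> g ^^ n) p)) (fst q) < e \<and> tdist (snd ((Fmap \<omega> g ^^ n) p)) (snd q) < e) \<or>
        (tdist (fst ((inv (Fmap \<omega> g) ^^ n) p)) (fst q) < e \<and> tdist (snd ((inv (Fmap \<omega> g) ^^ n) p)) (snd q) < e))"

fun Iseq :: "real \<Rightarrow> (real \<Rightarrow> real \<Rightarrow> real) \<Rightarrow> real set \<Rightarrow> real set \<Rightarrow> (nat \<Rightarrow> nat) \<Rightarrow> real set
             \<Rightarrow> nat \<Rightarrow> real set" where
  "Iseq \<omega> g C E M I0 0 = I0"
| "Iseq \<omega> g C E M I0 (Suc n) =
     interior (fst ` ((Fmap \<omega> g ^^ (M n - 1)) ` (shift (- (real (M n) - 1) * \<omega>) (Iseq \<omega> g C E M I0 n) \<times> C)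
                      \<inter> (Fmap \<omega> g ^^ (M n + 1)) -` (shift ((real (M n) + 1) * \<omega>) (Iseq \<omega> g C E M I0 n) \<times> E)))"

definition Wplus :: "real \<Rightarrow> (nat \<Rightarrow> real set) \<Rightarrow> (nat \<Rightarrow> nat) \<Rightarrow> nat \<Rightarrow> real set" where
  "Wplus \<omega> I M n = (\<Union>j\<le>n. \<Union>l\<in>{1..M j + 1}. shift (real l * \<omega>) (I j))"

definition Wminus :: "real \<Rightarrow> (nat \<Rightarrow> real set) \<Rightarrow> (nat \<Rightarrow> nat) \<Rightarrow> nat \<Rightarrow> real set" where
  "Wminus \<omega> I M n = (\<Union>j\<le>n. \<Union>l\<in>{- (int (M j) - 1)..0}. shift (of_int l * \<omega>) (I j))"

definition V_data ::
  "real \<Rightarrow> (real \<Rightarrow> real \<Rightarrow> real) \<Rightarrow> real \<Rightarrow> real \<Rightarrow> real \<Rightarrow> real \<Rightarrow> real set \<Rightarrow> nat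
   \<Rightarrow> real \<Rightarrow> real \<Rightarrow> nat \<Rightarrow> nat \<Rightarrow> (nat \<Rightarrow> nat) \<Rightarrow> (nat \<Rightarrow> real) \<Rightarrow> real
   \<Rightarrow> (real \<Rightarrow> real) \<Rightarrow> (real \<Rightarrow> real) \<Rightarrow> bool" where
  "V_data \<omega> g c1 c2 e1 e2 I0 N \<alpha> S \<kappa> K0 M \<epsilon> s phip phim \<longleftrightarrow>
     skew_class \<omega> g \<and>
     \<comment> \<open>(i)\<close>
     c1 < c2 \<and> c2 < c1 + 1 \<and> e1 < e2 \<and> e2 < e1 + 1 \<and> carc c1 c2 \<inter> carc e1 e2 = {} \<and>
     arc_union N (\<epsilon> 0) I0 \<and> \<alpha> > 4 \<and> S > 0 \<and>
     (\<forall>t x. x \<notin> oarc e1 e2 \<and> t \<notin> I0 \<longrightarrow> g t x \<in> oarc c1 c2) \<and>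
     (\<forall>t x x'. tdist x x' / \<alpha>\<^sup>2 \<le> tdist (g t x) (g t x') \<and> tdist (g t x) (g t x') \<le> \<alpha>\<^sup>2 * tdist x x') \<and>
     (\<forall>t t' x. tdist (g t x) (g t' x) \<le> S * tdist t t') \<and>
     (\<forall>t x. x \<in> carc c1 c2 \<longrightarrow> \<bar>deriv (g t) x\<bar> \<le> 1 / \<alpha>) \<and>
     (\<forall>t x. x \<in> carc e1 e2 \<longrightarrow> \<bar>deriv (g t) x\<bar> \<ge> \<alpha>) \<and>
     \<comment> \<open>(ii)\<close>
     \<kappa> \<ge> 2 \<and> K0 \<ge> 1 \<and>
     (\<exists>b. (\<lambda>n. \<Prod>j<n. (1 - 1 / real (K0 * \<kappa> ^ j))) \<longlonglongrightarrow> b \<and> b > sqrt (5 / 6)) \<and>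
     strict_mono M \<and> (\<forall>c>1. filterlim (\<lambda>n. real (M n) / c ^ n) at_top sequentially) \<and>
     M 0 \<ge> 2 \<and> (\<forall>n. real (M (Suc n)) \<le> 2 * \<alpha> powr (real (M n) / 16)) \<and>
     s > 0 \<and> decseq \<epsilon> \<and> (\<forall>n. \<epsilon> n > 0) \<and> \<epsilon> 0 \<le> 1 \<and>
     (\<forall>n. \<epsilon> (Suc n) \<le> 2 * \<alpha> powr (- real (M n) / 4) / s) \<and>
     summable (\<lambda>n. (2 * real (K0 * \<kappa> ^ n) * real (M n) + 1) * real N * \<epsilon> n) \<and>
     summable (\<lambda>n. sqrt (\<epsilon> n)) \<and>
     (\<Sum>n. (2 * real (K0 * \<kappa> ^ n) * real (M n) + 1) * real N * \<epsilon> n) \<le> (\<Sum>n. sqrt (\<epsilon> n)) \<and>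
     (\<Sum>n. sqrt (\<epsilon> n)) < 1 / 16 \<and>
     \<comment> \<open>(iii)\<close>
     (let I = Iseq \<omega> g (carc c1 c2) (carc e1 e2) M I0 in
       (\<forall>j. I j \<noteq> {}) \<and>
       (\<forall>j. I j \<inter> (\<Union>k\<in>{1..2 * (K0 * \<kappa> ^ j) * M j}. shift (real k * \<omega>) (I j)) = {}) \<and>
       (\<forall>j\<ge>1. (shift (- (real (M j) - 1) * \<omega>) (I j) \<union> shift ((real (M j) + 1) * \<omega>) (I j))
                 \<inter> (Wplus \<omega> I M (j - 1) \<union> Wminus \<omega> I M (j - 1)) = {}) \<and>
       (\<forall>n. arc_union N (\<epsilon> n) (I n))) \<and>
     \<comment> \<open>(iv)\<close>
     is_SNA \<omega> g phip \<and> is_SNR \<omega> g phim \<and>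
     (\<forall>\<mu>. erg_inv \<omega> g \<mu> \<longleftrightarrow> \<mu> = graph_measure phip \<or> \<mu> = graph_measure phim) \<and>
     \<comment> \<open>(v)\<close>
     minimal \<omega> g"

definition wp :: "real \<Rightarrow> (real \<Rightarrow> real) \<Rightarrow> real \<Rightarrow> real \<Rightarrow> real set \<Rightarrow> nat \<Rightarrow> real \<Rightarrow> real \<Rightarrow> nat" where
  "wp \<omega> \<phi> c1 c2 I0 n \<eta> \<eta>' =
     card {m::int. -1 \<le> m \<and> m < int n - 1 \<and>
                   \<phi> (\<eta> + of_int m * \<omega>) \<in> carc c1 c2 \<and> \<phi> (\<eta>' + of_int m * \<omega>) \<in> carc c1 c2 \<and>
                   \<eta> + of_int m * \<omega> \<notin> I0 \<and> \<eta>' + of_int m * \<omega> \<notin> I0}"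

end

theory Submission
  imports Defs
begin


lemma tdist_le: "tdist x y \<le> \<bar>x - y - of_int k\<bar>"
proof -
  have h: "\<bar>of_int (round (x-y)) - (x-y)\<bar> \<le> 1/2" by (rule of_int_round_abs_le)
  show ?thesis
  proof (cases "k = round (x-y)")
    case True then show ?thesis by (simp add: tdist_def)
  next
    case False
    then have "\<bar>k - round (x-y)\<bar> \<ge> 1" by linarith
    then have "\<bar>of_int k - of_int (round (x-y))\<bar> \<ge> (1::real)"
      by (metis of_int_1_le_iff of_int_abs of_int_diff)
    then show ?thesis using h unfolding tdist_def by linarith
  qed
qed

lemma tdist_nonneg: "tdist x y \<ge> 0" by (simp add: tdist_def)

lemma tdist_self_le: "tdist x y \<le> \<bar>x - y\<bar>"
  using tdist_le[of x y 0] by simp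

lemma tdist_triangle: "tdist x z \<le> tdist x y + tdist y z"
proof -
  have "tdist x z \<le> \<bar>x - z - of_int (round (x-y) + round (y-z))\<bar>" by (rule tdist_le)
  also have "\<dots> \<le> tdist x y + tdist y z" unfolding tdist_def by simp
  finally show ?thesis .
qed

lemma tdist_shift1: "tdist (x + of_int k) y = tdist x y"
proof -
  have "tdist (x + of_int k) y \<le> \<bar>x + of_int k - y - of_int (round (x-y) + k)\<bar>" by (rule tdist_le)
  also have "\<dots> = tdist x y" unfolding tdist_def by simp
  finally have 1: "tdist (x + of_int k) y \<le> tdist x y" .
  have "tdist x y \<le> \<bar>x - y - of_int (round (x + of_int k - y) - k)\<bar>" by (rule tdist_le)
  also have "\<dots> = tdist (x + of_int k) y" unfolding tdist_def by (simp add: algebra_simps)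
  finally show ?thesis using 1 by linarith
qed

lemma tdist_shift2: "tdist x (y + of_int k) = tdist x y"
proof -
  have "tdist x (y + of_int k) \<le> \<bar>x - (y + of_int k) - of_int (round (x-y) - k)\<bar>" by (rule tdist_le)
  also have "\<dots> = tdist x y" unfolding tdist_def by simp
  finally have 1: "tdist x (y + of_int k) \<le> tdist x y" .
  have "tdist x y \<le> \<bar>x - y - of_int (round (x - (y + of_int k)) + k)\<bar>" by (rule tdist_le)
  also have "\<dots> = tdist x (y + of_int k)" unfolding tdist_def by (simp add: algebra_simps)
  finally show ?thesis using 1 by linarith
qed

lemma tdist_small: "\<bar>x - y\<bar> < 1/2 \<Longrightarrow> tdist x y = \<bar>x - y\<bar>"
  unfolding tdist_def using round_unique'[of "x-y" 0] by simp

lemma frac_eq_shift: "frac a = frac b \<Longrightarrow> a = b + of_int (\<lfloor>a\<rfloor> - \<lfloor>b\<rfloor>)"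
  unfolding frac_def by simp

lemma tdist_frac1: "frac a = frac b \<Longrightarrow> tdist a y = tdist b y"
  by (metis frac_eq_shift tdist_shift1)

lemma tdist_frac2: "frac a = frac b \<Longrightarrow> tdist y a = tdist y b"
  by (metis frac_eq_shift tdist_shift2)

lemma per_nat: fixes g :: "real \<Rightarrow> real \<Rightarrow> real" assumes "\<forall>t x. g t (x + 1) = g t x + 1"
  shows "g t (x + real n) = g t x + real n"
proof (induction n)
  case 0 then show ?case by simp
next
  case (Suc n)
  have "g t (x + real (Suc n)) = g t (x + real n + 1)" by (simp add: algebra_simps)
  also have "\<dots> = g t (x + real n) + 1" using assms by blast
  finally show ?case using Suc by simp
qed

lemma per_int: fixes g :: "real \<Rightarrow> real \<Rightarrow> real" assumes "\<forall>t x. g t (x + 1) = g t x + 1"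
  shows "g t (x + of_int k) = g t x + of_int k"
proof (cases "k \<ge> 0")
  case True
  then obtain n where "k = int n" by (metis nonneg_eq_int)
  then show ?thesis using per_nat[OF assms] by simp
next
  case False
  then obtain n where k: "k = - int n" by (metis int_cases2 less_le_not_le nle_le of_nat_0_le_iff)
  have "g t (x - real n + real n) = g t (x - real n) + real n" using per_nat[OF assms] by blast
  then show ?thesis using k by simp
qed



lemma skew_deriv:
  fixes g :: "real \<Rightarrow> real \<Rightarrow> real"
  assumes "skew_class \<omega> g"
  shows "\<exists>gx. \<forall>t x. (g t has_real_derivative gx t x) (at x)"
proof -
  from assms obtain gt gx :: "real \<Rightarrow> real \<Rightarrow> real" where
    d: "\<forall>t x. ((\<lambda>p. g (fst p) (snd p)) has_derivative
                  (\<lambda>h. fst h * gt t x + snd h * gx t x)) (at (t, x))"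
    unfolding skew_class_def by blast
  have "(g t has_real_derivative gx t x) (at x)" for t x
  proof -
    have p: "((\<lambda>y. (t, y)) has_derivative (\<lambda>h. (0, h))) (at x)"
      by (auto intro!: derivative_eq_intros)
    have "((\<lambda>y. g (fst (t,y)) (snd (t,y))) has_derivative
         (\<lambda>h. fst (0::real, h) * gt t x + snd (0::real, h) * gx t x)) (at x)"
      by (rule has_derivative_compose[OF p d[rule_format, of t x]])
    then have "(g t has_derivative (\<lambda>h. h * gx t x)) (at x)" by simp
    moreover have "(\<lambda>h. h * gx t x) = (*) (gx t x)" by (auto simp: fun_eq_iff)
    ultimately show ?thesis unfolding has_field_derivative_def by simp
  qed
  then show ?thesis by blast
qed

lemma lip_C:
  fixes g :: "real \<Rightarrow> real \<Rightarrow> real"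
  assumes d: "\<forall>t x. (g t has_real_derivative gx t x) (at x)"
    and b: "\<forall>t x. x \<in> carc c1 c2 \<longrightarrow> \<bar>deriv (g t) x\<bar> \<le> 1 / \<alpha>"
    and u: "c1 + of_int k \<le> u" "u \<le> c2 + of_int k"
    and v: "c1 + of_int k \<le> v" "v \<le> c2 + of_int k"
  shows "\<bar>g t u - g t v\<bar> \<le> \<bar>u - v\<bar> * (1 / \<alpha>)"
proof -
  have key: "\<bar>g t b - g t a\<bar> \<le> \<bar>b - a\<bar> * (1 / \<alpha>)"
    if "c1 + of_int k \<le> a" "a < b" "b \<le> c2 + of_int k" for a b
  proof -
    obtain z where z: "a < z" "z < b" "g t b - g t a = (b - a) * gx t z"
      using MVT2[OF \<open>a < b\<close>, of "g t" "gx t"] d by blast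
    have "z \<in> carc c1 c2" unfolding carc_def mem_Collect_eq
      by (rule exI[of _ "-k"]) (use that z in auto)
    then have gz: "\<bar>gx t z\<bar> \<le> 1 / \<alpha>" using b DERIV_imp_deriv[OF d[rule_format]] by metis
    have "\<bar>(b - a) * gx t z\<bar> \<le> \<bar>b - a\<bar> * (1 / \<alpha>)"
      using mult_left_mono[OF gz, of "\<bar>b - a\<bar>"] by (simp add: abs_mult)
    then show ?thesis using z by simp
  qed
  show ?thesis
  proof (cases u v rule: linorder_cases)
    case less then show ?thesis using key[of u v] u v by (simp add: abs_minus_commute)
  next
    case equal then show ?thesis by simp
  next
    case greater then show ?thesis using key[of v u] u v by (simp add: abs_minus_commute)
  qed
qed

lemma gap:
  fixes c1 c2 e1 e2 :: real
  assumes "c1 < c2" "c2 < c1 + 1" "e1 < e2" "e2 < e1 + 1" "carc c1 c2 \<inter> carc e1 e2 = {}"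
  shows "(c2 - c1) + (e2 - e1) < 1"
proof -
  define j where "j = \<lceil>c1 - e1\<rceil>"
  have j1: "c1 \<le> e1 + of_int j" and j2: "e1 + of_int j < c1 + 1"
    unfolding j_def by linarith+
  have e1C: "e1 \<in> carc e1 e2" unfolding carc_def using assms by (auto intro: exI[of _ 0])
  have "\<not> e1 + of_int j \<le> c2"
  proof
    assume "e1 + of_int j \<le> c2"
    then have "e1 \<in> carc c1 c2" unfolding carc_def using j1 by blast
    then show False using e1C assms(5) by blast
  qed
  then have c2l: "c2 < e1 + of_int j" by simp
  have cC: "c1 + 1 \<in> carc c1 c2" unfolding carc_def using assms
    by (auto intro: exI[of _ "-1"])
  have "\<not> c1 + 1 \<le> e2 + of_int j"
  proof
    assume h: "c1 + 1 \<le> e2 + of_int j"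
    have "c1 + 1 \<in> carc e1 e2" unfolding carc_def mem_Collect_eq
      by (rule exI[of _ "-j"]) (use h j2 in auto)
    then show False using cC assms(5) by blast
  qed
  then show ?thesis using c2l by linarith
qed

lemma component:
  fixes g :: "real \<Rightarrow> real \<Rightarrow> real"
  assumes cont: "continuous_on UNIV (g t)"
    and c: "c1 < c2" "c2 < c1 + 1"
    and into: "\<forall>u. c1 \<le> u \<and> u \<le> c2 \<longrightarrow> g t u \<in> oarc c1 c2"
  shows "\<exists>k::int. \<forall>u. c1 \<le> u \<and> u \<le> c2 \<longrightarrow> c1 + of_int k < g t u \<and> g t u < c2 + of_int k"
proof -
  have nb: "\<not> (w \<in> oarc c1 c2)" if "w = c1 + of_int m \<or> w = c2 + of_int m" for w m
  proof
    assume "w \<in> oarc c1 c2"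
    then obtain j where "c1 < w + of_int j" "w + of_int j < c2" unfolding oarc_def by blast
    define i where "i = m + j"
    have "(0::real) < of_int i \<and> of_int i < (1::real) \<or>
               (-1::real) < of_int i \<and> of_int i < (0::real)"
      using that c \<open>c1 < w + of_int j\<close> \<open>w + of_int j < c2\<close> unfolding i_def by auto
    moreover have "i \<le> -1 \<or> i = 0 \<or> i \<ge> 1" by linarith
    then have "real_of_int i \<le> -1 \<or> real_of_int i = 0 \<or> real_of_int i \<ge> 1" by auto
    ultimately show False by linarith
  qed
  obtain j where j: "c1 < g t c1 + of_int j" "g t c1 + of_int j < c2"
    using into c unfolding oarc_def by force
  show ?thesis
  proof (rule exI[of _ "-j"], intro allI impI)
    fix u assume u: "c1 \<le> u \<and> u \<le> c2"
    have co: "continuous_on {c1..u} (g t)" using cont continuous_on_subset by blast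
    show "c1 + of_int (-j) < g t u \<and> g t u < c2 + of_int (-j)"
    proof (rule ccontr)
      assume "\<not> ?thesis"
      then consider "g t u \<ge> c2 + of_int (-j)" | "g t u \<le> c1 + of_int (-j)" by linarith
      then show False
      proof cases
        case 1
        obtain w where w: "c1 \<le> w" "w \<le> u" "g t w = c2 + of_int (-j)"
          using IVT'[of "g t" c1 "c2 + of_int (-j)" u] 1 j u co by auto
        then show False using nb[of "g t w" "-j"] into u by auto
      next
        case 2
        obtain w where w: "c1 \<le> w" "w \<le> u" "g t w = c1 + of_int (-j)"
          using IVT2'[of "g t" u "c1 + of_int (-j)" c1] 2 j u co by auto
        then show False using nb[of "g t w" "-j"] into u by auto
      qed
    qed
  qed
qed



lemma contract_core:
  fixes g :: "real \<Rightarrow> real \<Rightarrow> real"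
  assumes per: "\<forall>t x. g t (x + 1) = g t x + 1"
    and d: "\<forall>t x. (g t has_real_derivative gx t x) (at x)"
    and b: "\<forall>t x. x \<in> carc c1 c2 \<longrightarrow> \<bar>deriv (g t) x\<bar> \<le> 1 / \<alpha>"
    and cc: "c1 < c2" "c2 < c1 + 1" and ee: "e1 < e2" "e2 < e1 + 1"
    and disj: "carc c1 c2 \<inter> carc e1 e2 = {}"
    and mp: "\<forall>t x. x \<notin> oarc e1 e2 \<and> t \<notin> I0 \<longrightarrow> g t x \<in> oarc c1 c2"
    and Sl: "\<forall>t t' x. tdist (g t x) (g t' x) \<le> S * tdist t t'"
    and a4: "\<alpha> > 4"
    and tt: "t \<notin> I0" "t' \<notin> I0"
    and y: "c1 \<le> y" "y \<le> c2" and y': "c1 \<le> y'" "y' \<le> c2"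
    and St: "S * tdist t t' < (e2 - e1) / 4"
  shows "tdist (g s (g t y)) (g s (g t' y')) \<le> tdist (g t y) (g t' y') / \<alpha>"
proof -
  have gp: "(c2 - c1) + (e2 - e1) < 1" using gap[OF cc ee disj] .
  have cont: "continuous_on UNIV (g t)" for t
    using d by (meson DERIV_isCont continuous_at_imp_continuous_on)
  have into: "\<forall>u. c1 \<le> u \<and> u \<le> c2 \<longrightarrow> g t u \<in> oarc c1 c2" if "t \<notin> I0" for t
  proof (intro allI impI)
    fix u assume u: "c1 \<le> u \<and> u \<le> c2"
    have "u \<in> carc c1 c2" unfolding carc_def mem_Collect_eq by (rule exI[of _ 0]) (use u in simp)
    moreover have "oarc e1 e2 \<subseteq> carc e1 e2" unfolding oarc_def carc_def by (auto intro: less_imp_le)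
    ultimately have "u \<notin> oarc e1 e2" using disj by blast
    then show "g t u \<in> oarc c1 c2" using mp that by blast
  qed
  obtain k where k: "\<forall>u. c1 \<le> u \<and> u \<le> c2 \<longrightarrow> c1 + of_int k < g t u \<and> g t u < c2 + of_int k"
    using component[of g t c1 c2, OF cont[of t] cc into[OF tt(1)]] by blast
  obtain k' where k': "\<forall>u. c1 \<le> u \<and> u \<le> c2 \<longrightarrow> c1 + of_int k' < g t' u \<and> g t' u < c2 + of_int k'"
    using component[of g "t'" c1 c2, OF cont[of "t'"] cc into[OF tt(2)]] by blast
  define x where "x = g t y"
  define z where "z = g t y'"
  define x' where "x' = g t' y'"
  have "\<bar>x - z\<bar> \<le> \<bar>y - y'\<bar> * (1 / \<alpha>)" unfolding x_def z_def
    using lip_C[OF d b, of 0 y y' t] y y' by simp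
  also have "\<dots> \<le> (c2 - c1) * (1 / \<alpha>)" using y y' a4 by (intro mult_right_mono) auto
  also have "\<dots> < 1 / 4" using cc a4 by (simp add: field_simps)
  finally have xz: "\<bar>x - z\<bar> < 1/4" .
  define r where "r = round (z - x')"
  define x'' where "x'' = x' + of_int r"
  have "\<bar>z - x''\<bar> = tdist z x'" unfolding x''_def r_def tdist_def by (simp add: algebra_simps)
  also have "\<dots> \<le> S * tdist t t'" unfolding z_def x'_def using Sl by blast
  finally have zx: "\<bar>z - x''\<bar> < (e2 - e1) / 4" using St by linarith
  have xin: "c1 + of_int k < x" "x < c2 + of_int k" "c1 + of_int k < z" "z < c2 + of_int k"
    unfolding x_def z_def using k y y' by auto
  have x''in: "c1 + of_int (k' + r) < x''" "x'' < c2 + of_int (k' + r)"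
    unfolding x''_def x'_def using k' y' by auto
  have kk: "k' + r = k"
  proof (rule ccontr)
    assume "k' + r \<noteq> k"
    then consider "k' + r \<ge> k + 1" | "k' + r \<le> k - 1" by linarith
    then show False
    proof cases
      case 1
      then have "real_of_int (k' + r) \<ge> of_int k + 1" by linarith
      then show False using x''in xin zx gp ee by (auto simp: abs_if split: if_splits)
    next
      case 2
      then have "real_of_int (k' + r) \<le> of_int k - 1" by linarith
      then show False using x''in xin zx gp ee by (auto simp: abs_if split: if_splits)
    qed
  qed
  have x''in2: "c1 + of_int k \<le> x''" "x'' \<le> c2 + of_int k" using x''in kk by auto
  have half: "\<bar>x - x''\<bar> < 1/2" using xz zx ee by (simp add: abs_if split: if_splits)
  have tx: "tdist x x' = \<bar>x - x''\<bar>"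
    using tdist_shift2[of x x' r] tdist_small[OF half] unfolding x''_def by simp
  have "tdist (g s x) (g s x') = tdist (g s x) (g s x'')"
    unfolding x''_def using per_int[OF per] tdist_shift2 by metis
  also have "\<dots> \<le> \<bar>g s x - g s x''\<bar>" by (rule tdist_self_le)
  also have "\<dots> \<le> \<bar>x - x''\<bar> * (1 / \<alpha>)"
    using lip_C[OF d b, of k x x'' s] xin x''in2 by simp
  finally show ?thesis unfolding x_def x'_def using tx x_def x'_def by simp
qed



lemma contract:
  fixes g :: "real \<Rightarrow> real \<Rightarrow> real"
  assumes per: "\<forall>t x. g t (x + 1) = g t x + 1"
    and d: "\<forall>t x. (g t has_real_derivative gx t x) (at x)"
    and b: "\<forall>t x. x \<in> carc c1 c2 \<longrightarrow> \<bar>deriv (g t) x\<bar> \<le> 1 / \<alpha>"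
    and cc: "c1 < c2" "c2 < c1 + 1" and ee: "e1 < e2" "e2 < e1 + 1"
    and disj: "carc c1 c2 \<inter> carc e1 e2 = {}"
    and mp: "\<forall>t x. x \<notin> oarc e1 e2 \<and> t \<notin> I0 \<longrightarrow> g t x \<in> oarc c1 c2"
    and Sl: "\<forall>t t' x. tdist (g t x) (g t' x) \<le> S * tdist t t'"
    and a4: "\<alpha> > 4"
    and tt: "t \<notin> I0" "t' \<notin> I0"
    and y: "y \<in> carc c1 c2" and y': "y' \<in> carc c1 c2"
    and St: "S * tdist t t' < (e2 - e1) / 4"
  shows "tdist (g s (g t y)) (g s (g t' y')) \<le> tdist (g t y) (g t' y') / \<alpha>"
proof -
  obtain j where j: "c1 \<le> y + of_int j" "y + of_int j \<le> c2" using y unfolding carc_def by blast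
  obtain j' where j': "c1 \<le> y' + of_int j'" "y' + of_int j' \<le> c2" using y' unfolding carc_def by blast
  have core: "tdist (g s (g t (y + of_int j))) (g s (g t' (y' + of_int j'))) \<le>
      tdist (g t (y + of_int j)) (g t' (y' + of_int j')) / \<alpha>"
    by (rule contract_core[OF per d b cc ee disj mp Sl a4 tt j j' St])
  have e1: "g t (y + of_int j) = g t y + of_int j" "g t' (y' + of_int j') = g t' y' + of_int j'"
    using per_int[OF per] by auto
  have e2: "g s (g t y + of_int j) = g s (g t y) + of_int j"
     "g s (g t' y' + of_int j') = g s (g t' y') + of_int j'"
    using per_int[OF per] by auto
  show ?thesis using core unfolding e1 e2 tdist_shift1 tdist_shift2 .
qed

lemma card_Suc_aux:
  "card {m::int. -1 \<le> m \<and> m < int (Suc n) - 1 \<and> R m} =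
   card {m::int. -1 \<le> m \<and> m < int n - 1 \<and> R m} + (if R (int n - 1) then 1 else 0)"
proof -
  have fin: "finite {m::int. -1 \<le> m \<and> m < int n - 1 \<and> R m}"
    by (rule finite_subset[of _ "{-1..int n}"]) auto
  show ?thesis
  proof (cases "R (int n - 1)")
    case True
    then have "{m::int. -1 \<le> m \<and> m < int (Suc n) - 1 \<and> R m} =
      insert (int n - 1) {m::int. -1 \<le> m \<and> m < int n - 1 \<and> R m}" by auto
    then show ?thesis using fin True by simp
  next
    case False
    have "(-1 \<le> m \<and> m < int (Suc n) - 1 \<and> R m) = (-1 \<le> m \<and> m < int n - 1 \<and> R m)" for m
      by (cases "m = int n - 1") (use False in auto)
    then have "{m::int. -1 \<le> m \<and> m < int (Suc n) - 1 \<and> R m} =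
      {m::int. -1 \<le> m \<and> m < int n - 1 \<and> R m}" by blast
    then show ?thesis using False by simp
  qed
qed

lemma wp_Suc:
  "wp \<omega> \<phi> c1 c2 I0 (Suc n) \<eta> \<eta>' = wp \<omega> \<phi> c1 c2 I0 n \<eta> \<eta>' +
     (if \<phi> (\<eta> + of_int (int n - 1) * \<omega>) \<in> carc c1 c2 \<and> \<phi> (\<eta>' + of_int (int n - 1) * \<omega>) \<in> carc c1 c2 \<and>
         \<eta> + of_int (int n - 1) * \<omega> \<notin> I0 \<and> \<eta>' + of_int (int n - 1) * \<omega> \<notin> I0 then 1 else 0)"
  unfolding wp_def by (rule card_Suc_aux)

lemma card0_aux: "card {m::int. -1 \<le> m \<and> m < int 0 - 1 \<and> R m} = 0"
proof -
  have e: "{m::int. -1 \<le> m \<and> m < -1 \<and> R m} = {}" by auto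
  show ?thesis unfolding of_nat_0 diff_0 e by (rule card.empty)
qed

lemma wp_0: "wp \<omega> \<phi> c1 c2 I0 0 \<eta> \<eta>' = 0"
  unfolding wp_def by (rule card0_aux)



theorem mainTheorem6:
  fixes \<omega> :: real and g :: "real \<Rightarrow> real \<Rightarrow> real"
    and c1 c2 e1 e2 \<alpha> S s \<theta> \<theta>' :: real and I0 :: "real set"
    and N \<kappa> K0 :: nat and M :: "nat \<Rightarrow> nat" and \<epsilon> :: "nat \<Rightarrow> real"
    and phip phim :: "real \<Rightarrow> real" and n :: nat
  assumes "\<omega> \<notin> \<rat>"
    and "V_data \<omega> g c1 c2 e1 e2 I0 N \<alpha> S \<kappa> K0 M \<epsilon> s phip phim"
    and "tdist \<theta> \<theta>' < (e2 - e1) / (4 * S)"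
    and "\<forall>m::int. frac (phip (\<theta> + of_int m * \<omega> + \<omega>)) = frac (g (\<theta> + of_int m * \<omega>) (phip (\<theta> + of_int m * \<omega>)))
               \<and> frac (phip (\<theta>' + of_int m * \<omega> + \<omega>)) = frac (g (\<theta>' + of_int m * \<omega>) (phip (\<theta>' + of_int m * \<omega>)))"
    and "n \<ge> 1"
  shows "tdist (phip (\<theta> + real n * \<omega>)) (phip (\<theta>' + real n * \<omega>))
           \<le> \<alpha> powr (2 * real n - 3 * real (wp \<omega> phip c1 c2 I0 n \<theta> \<theta>')) * tdist (phip \<theta>) (phip \<theta>')
             + S * tdist \<theta> \<theta>' *
               (\<Sum>k = 1..n. \<alpha> powr (2 * real (n - k)
                   - 3 * real (wp \<omega> phip c1 c2 I0 (n - k) (\<theta> + real k * \<omega>) (\<theta>' + real k * \<omega>))))"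
proof -
  note V = assms(2)[unfolded V_data_def]
  have sk: "skew_class \<omega> g" using V by blast
  have cc: "c1 < c2" "c2 < c1 + 1" using V by blast+
  have ee: "e1 < e2" "e2 < e1 + 1" using V by blast+
  have disj: "carc c1 c2 \<inter> carc e1 e2 = {}" using V by blast
  have a4: "\<alpha> > 4" and Sp: "S > 0" using V by blast+
  have mp: "\<forall>t x. x \<notin> oarc e1 e2 \<and> t \<notin> I0 \<longrightarrow> g t x \<in> oarc c1 c2" using V by blast
  have lip: "\<forall>t x x'. tdist x x' / \<alpha>\<^sup>2 \<le> tdist (g t x) (g t x') \<and> tdist (g t x) (g t x') \<le> \<alpha>\<^sup>2 * tdist x x'"
    using V by blast
  have Sl: "\<forall>t t' x. tdist (g t x) (g t' x) \<le> S * tdist t t'" using V by blast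
  have b: "\<forall>t x. x \<in> carc c1 c2 \<longrightarrow> \<bar>deriv (g t) x\<bar> \<le> 1 / \<alpha>" using V by blast
  have per: "\<forall>t x. g t (x + 1) = g t x + 1" using sk unfolding skew_class_def by blast
  obtain gx where d: "\<forall>t x. (g t has_real_derivative gx t x) (at x)" using skew_deriv[OF sk] by blast
  define \<delta> where "\<delta> = tdist \<theta> \<theta>'"
  have Sd: "S * \<delta> < (e2 - e1) / 4" using assms(3) Sp unfolding \<delta>_def by (simp add: field_simps)
  have d0: "\<delta> \<ge> 0" unfolding \<delta>_def by (rule tdist_nonneg)
  have td: "tdist (\<theta> + c) (\<theta>' + c) = \<delta>" for c unfolding \<delta>_def tdist_def by (simp add: algebra_simps)
  define P where "P m \<longleftrightarrow> phip (\<theta> + of_int m * \<omega>) \<in> carc c1 c2 \<and> phip (\<theta>' + of_int m * \<omega>) \<in> carc c1 c2 \<and>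
         \<theta> + of_int m * \<omega> \<notin> I0 \<and> \<theta>' + of_int m * \<omega> \<notin> I0" for m :: int
  define D where "D j = tdist (phip (\<theta> + real j * \<omega>)) (phip (\<theta>' + real j * \<omega>))" for j :: nat
  define L where "L j = (if P (int j - 1) then -1 else 2 :: real)" for j :: nat
  define W where "W n k = wp \<omega> phip c1 c2 I0 n (\<theta> + real k * \<omega>) (\<theta>' + real k * \<omega>)" for n k :: nat
  have Wsuc: "W (Suc n) k = W n k + (if P (int k + int n - 1) then 1 else 0)" for n k
  proof -
    have e: "\<theta> + real k * \<omega> + of_int (int n - 1) * \<omega> = \<theta> + of_int (int k + int n - 1) * \<omega>"
      "\<theta>' + real k * \<omega> + of_int (int n - 1) * \<omega> = \<theta>' + of_int (int k + int n - 1) * \<omega>"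
      by (simp_all add: algebra_simps)
    show ?thesis unfolding W_def wp_Suc e P_def by simp
  qed
  have W0: "W 0 k = 0" for k unfolding W_def by (rule wp_0)
  have fr: "frac (phip (\<theta> + of_int m * \<omega> + \<omega>)) = frac (g (\<theta> + of_int m * \<omega>) (phip (\<theta> + of_int m * \<omega>)))"
     "frac (phip (\<theta>' + of_int m * \<omega> + \<omega>)) = frac (g (\<theta>' + of_int m * \<omega>) (phip (\<theta>' + of_int m * \<omega>)))"
     for m :: int using assms(4) by blast+
  have ap: "\<alpha> > 0" using a4 by simp
  have step: "D (Suc j) \<le> \<alpha> powr (L j) * D j + S * \<delta>" for j
  proof -
    define t where "t = \<theta> + real j * \<omega>"
    define t' where "t' = \<theta>' + real j * \<omega>"
    define m where "m = int j - 1"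
    define u where "u = \<theta> + of_int m * \<omega>"
    define u' where "u' = \<theta>' + of_int m * \<omega>"
    have eqs: "\<theta> + of_int (int j) * \<omega> + \<omega> = \<theta> + real (Suc j) * \<omega>"
      "\<theta>' + of_int (int j) * \<omega> + \<omega> = \<theta>' + real (Suc j) * \<omega>"
      "\<theta> + of_int (int j) * \<omega> = t" "\<theta>' + of_int (int j) * \<omega> = t'"
      "u + \<omega> = t" "u' + \<omega> = t'"
      unfolding t_def t'_def u_def u'_def m_def by (simp_all add: algebra_simps)
    have teq: "t + \<omega> = \<theta> + real (Suc j) * \<omega>" "t' + \<omega> = \<theta>' + real (Suc j) * \<omega>"
      unfolding t_def t'_def by (simp_all add: algebra_simps)
    have f1: "frac (phip (\<theta> + real (Suc j) * \<omega>)) = frac (g t (phip t))"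
      "frac (phip (\<theta>' + real (Suc j) * \<omega>)) = frac (g t' (phip t'))"
      using fr[of "int j"] unfolding eqs(3,4) teq by auto
    have f0: "frac (phip t) = frac (g u (phip u))" "frac (phip t') = frac (g u' (phip u'))"
      using fr[of m] unfolding u_def[symmetric] u'_def[symmetric] eqs by auto
    have "D (Suc j) = tdist (g t (phip t)) (g t' (phip t'))"
      unfolding D_def using tdist_frac1[OF f1(1)] tdist_frac2[OF f1(2)] by simp
    also have "\<dots> \<le> tdist (g t (phip t)) (g t (phip t')) + tdist (g t (phip t')) (g t' (phip t'))"
      by (rule tdist_triangle)
    also have "tdist (g t (phip t')) (g t' (phip t')) \<le> S * \<delta>"
      using Sl td unfolding t_def t'_def by metis
    finally have 1: "D (Suc j) \<le> tdist (g t (phip t)) (g t (phip t')) + S * \<delta>" by simp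
    have Dj: "D j = tdist (phip t) (phip t')" unfolding D_def t_def t'_def by simp
    show ?thesis
    proof (cases "P m")
      case False
      then have "L j = 2" unfolding L_def m_def by simp
      then have "\<alpha> powr L j = \<alpha>\<^sup>2" using ap by simp
      moreover have "tdist (g t (phip t)) (g t (phip t')) \<le> \<alpha>\<^sup>2 * D j" unfolding Dj using lip by blast
      ultimately show ?thesis using 1 by simp
    next
      case True
      then have "L j = -1" unfolding L_def m_def by simp
      then have aL: "\<alpha> powr L j = 1 / \<alpha>" using ap by (simp add: powr_minus_divide)
      obtain K where K: "phip t = g u (phip u) + of_int K" using frac_eq_shift[OF f0(1)] by blast
      obtain K' where K': "phip t' = g u' (phip u') + of_int K'" using frac_eq_shift[OF f0(2)] by blast
      have Pu: "phip u \<in> carc c1 c2" "phip u' \<in> carc c1 c2" "u \<notin> I0" "u' \<notin> I0"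
        using True unfolding P_def u_def u'_def by auto
      have Su: "S * tdist u u' < (e2 - e1) / 4" using Sd td unfolding u_def u'_def by metis
      have "tdist (g t (phip t)) (g t (phip t')) = tdist (g t (g u (phip u))) (g t (g u' (phip u')))"
        unfolding K K' per_int[OF per] tdist_shift1 tdist_shift2 by simp
      also have "\<dots> \<le> tdist (g u (phip u)) (g u' (phip u')) / \<alpha>"
        by (rule contract[OF per d b cc ee disj mp Sl a4 Pu(3,4) Pu(1,2) Su])
      also have "tdist (g u (phip u)) (g u' (phip u')) = D j"
        unfolding Dj K K' tdist_shift1 tdist_shift2 by simp
      finally show ?thesis using 1 aL by simp
    qed
  qed
  have main: "D n \<le> \<alpha> powr (2 * real n - 3 * real (W n 0)) * D 0 +
      S * \<delta> * (\<Sum>k = 1..n. \<alpha> powr (2 * real (n - k) - 3 * real (W (n - k) k)))" for n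
  proof (induction n)
    case 0
    then show ?case using W0 ap by simp
  next
    case (Suc n)
    define A where "A = \<alpha> powr (2 * real n - 3 * real (W n 0))"
    define \<Sigma> where "\<Sigma> = (\<Sum>k = 1..n. \<alpha> powr (2 * real (n - k) - 3 * real (W (n - k) k)))"
    have eA: "\<alpha> powr L n * A = \<alpha> powr (2 * real (Suc n) - 3 * real (W (Suc n) 0))"
      unfolding A_def powr_add[symmetric] Wsuc L_def by (auto simp: algebra_simps)
    have eT: "\<alpha> powr L n * \<alpha> powr (2 * real (n - k) - 3 * real (W (n - k) k)) =
              \<alpha> powr (2 * real (Suc n - k) - 3 * real (W (Suc n - k) k))" if "k \<le> n" for k
    proof -
      have s: "Suc n - k = Suc (n - k)" using that by simp
      have i: "int k + int (n - k) - 1 = int n - 1" using that by simp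
      show ?thesis unfolding powr_add[symmetric] s Wsuc i L_def using that
        by (auto simp: algebra_simps of_nat_diff)
    qed
    have eS: "\<alpha> powr L n * \<Sigma> = (\<Sum>k = 1..n. \<alpha> powr (2 * real (Suc n - k) - 3 * real (W (Suc n - k) k)))"
      unfolding \<Sigma>_def sum_distrib_left by (rule sum.cong[OF refl], rule eT) simp
    have eS2: "(\<Sum>k = 1..Suc n. \<alpha> powr (2 * real (Suc n - k) - 3 * real (W (Suc n - k) k))) =
        (\<Sum>k = 1..n. \<alpha> powr (2 * real (Suc n - k) - 3 * real (W (Suc n - k) k))) + 1"
      using W0 ap by simp
    have pos: "\<alpha> powr L n \<ge> 0" by simp
    have "D (Suc n) \<le> \<alpha> powr L n * D n + S * \<delta>" by (rule step)
    also have "\<dots> \<le> \<alpha> powr L n * (A * D 0 + S * \<delta> * \<Sigma>) + S * \<delta>"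
      using mult_left_mono[OF Suc.IH pos] unfolding A_def \<Sigma>_def by simp
    also have "\<dots> = (\<alpha> powr L n * A) * D 0 + S * \<delta> * (\<alpha> powr L n * \<Sigma> + 1)"
      by (simp add: algebra_simps)
    finally show ?case unfolding eA eS eS2 .
  qed
  show ?thesis using main[of n] unfolding D_def W_def \<delta>_def by simp
qed


end
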